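(* Let $X\subset U\subset\mathbb{R}^n$, where $U$ is open and $X$ is closed in $U$, and let $p\in\mathbb{N}$, $k\ge1$. For $i=0,1,\dots,k$ let $(a_{ij})_{j\ge1}$ be a sequence in $X$ and $(\xi_{ij})_{j\ge1}$ a sequence in $\mathcal{P}_p^*$ such that: (1) the sequences $(a_{ij})_j$, $i=0,\dots,k$, converge to a common point $a\in X$, and $\sum_{i=0}^k\xi_{ij}$ converges to $\xi\in\mathcal{P}_p^*$ as $j\to\infty$; (2) $|a_{ij}-a_{0j}|^{p-|\alpha|}|\xi_{ij,\alpha}(a_{ij})|\le c$ for all $i,j$ and all $|\alpha|\le p$, where $c$ is a constant. If $F=(F^\alpha)_{|\alpha|\le p}$ is a $\mathcal{C}^p$ Whitney field on $X$, then $$\xi(F,a)=\lim_{j\to\infty}\sum_{i=0}^k\xi_{ij}(F,a_{ij}).$$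
   Context: $\mathcal{P}_p$ is the space of real polynomials on $\mathbb{R}^n$ of degree $\le p$, $\mathcal{P}_p^*$ its dual; for $\xi\in\mathcal{P}_p^*$, $b\in\mathbb{R}^n$, $|\alpha|\le p$, $\xi_\alpha(b):=\xi(\tfrac1{\alpha!}(x-b)^\alpha)$. For a family $F=(F^\alpha)_{|\alpha|\le p}$ of functions $F^\alpha:X\to\mathbb{R}$ and $a\in X$, $T^p_aF(x):=\sum_{|\alpha|\le p}\frac1{\alpha!}F^\alpha(a)(x-a)^\alpha$ and $\xi(F,a):=\xi(T^p_aF)$. Set $\delta_\alpha(a,b):=\big(F^\alpha(b)-\sum_{|\beta|\le p-|\alpha|}\frac1{\beta!}F^{\alpha+\beta}(a)(b-a)^\beta\big)/|b-a|^{p-|\alpha|}$ for $a\ne b$ in $X$. $F$ is a $\mathcal{C}^p$ Whitney field on $X$ if for every $c\in X$ and every $|\alpha|\le p$, $\delta_\alpha(a,b)\to0$ as $a,b\to c$ in $X$ with $a\ne b$. *)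

theory Defs
  imports "HOL-Analysis.Analysis"
begin

definition mdeg :: "('n::finite \<Rightarrow> nat) \<Rightarrow> nat" where
  "mdeg \<alpha> = (\<Sum>i\<in>UNIV. \<alpha> i)"

definition mfact :: "('n::finite \<Rightarrow> nat) \<Rightarrow> real" where
  "mfact \<alpha> = (\<Prod>i\<in>UNIV. fact (\<alpha> i))"

definition mpow :: "real^'n::finite \<Rightarrow> ('n \<Rightarrow> nat) \<Rightarrow> real" where
  "mpow x \<alpha> = (\<Prod>i\<in>UNIV. (x $ i) ^ (\<alpha> i))"

definition midx :: "nat \<Rightarrow> ('n::finite \<Rightarrow> nat) set" where
  "midx p = {\<alpha>. mdeg \<alpha> \<le> p}"

definition Poly_le :: "nat \<Rightarrow> (real^'n::finite \<Rightarrow> real) set" where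
  "Poly_le p = {f. \<exists>c::('n \<Rightarrow> nat) \<Rightarrow> real.
      f = (\<lambda>x. \<Sum>\<alpha>\<in>midx p. c \<alpha> * mpow x \<alpha>)}"

definition in_dual :: "nat \<Rightarrow> ((real^'n::finite \<Rightarrow> real) \<Rightarrow> real) \<Rightarrow> bool" where
  "in_dual p \<xi> \<longleftrightarrow>
     (\<forall>P\<in>Poly_le p. \<forall>Q\<in>Poly_le p. \<xi> (\<lambda>x. P x + Q x) = \<xi> P + \<xi> Q) \<and>
     (\<forall>P\<in>Poly_le p. \<forall>r. \<xi> (\<lambda>x. r * P x) = r * \<xi> P)"

text \<open>Convergence in the (finite-dimensional) space P_p^*.\<close>

definition dual_tendsto :: "nat \<Rightarrow> (nat \<Rightarrow> (real^'n::finite \<Rightarrow> real) \<Rightarrow> real)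
    \<Rightarrow> ((real^'n \<Rightarrow> real) \<Rightarrow> real) \<Rightarrow> bool" where
  "dual_tendsto p s \<xi> \<longleftrightarrow> (\<forall>P\<in>Poly_le p. (\<lambda>j. s j P) \<longlonglongrightarrow> \<xi> P)"

definition dual_coord :: "((real^'n::finite \<Rightarrow> real) \<Rightarrow> real) \<Rightarrow> ('n \<Rightarrow> nat) \<Rightarrow> real^'n \<Rightarrow> real" where
  "dual_coord \<xi> \<alpha> b = \<xi> (\<lambda>x. mpow (x - b) \<alpha> / mfact \<alpha>)"

definition taylor :: "nat \<Rightarrow> (('n::finite \<Rightarrow> nat) \<Rightarrow> real^'n \<Rightarrow> real) \<Rightarrow> real^'n \<Rightarrow> real^'n \<Rightarrow> real" where
  "taylor p F a = (\<lambda>x. \<Sum>\<alpha>\<in>midx p. F \<alpha> a / mfact \<alpha> * mpow (x - a) \<alpha>)"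

definition whitney_delta :: "nat \<Rightarrow> (('n::finite \<Rightarrow> nat) \<Rightarrow> real^'n \<Rightarrow> real) \<Rightarrow> ('n \<Rightarrow> nat)
    \<Rightarrow> real^'n \<Rightarrow> real^'n \<Rightarrow> real" where
  "whitney_delta p F \<alpha> a b =
     (F \<alpha> b - (\<Sum>\<beta>\<in>midx (p - mdeg \<alpha>). F (\<lambda>i. \<alpha> i + \<beta> i) a / mfact \<beta> * mpow (b - a) \<beta>))
     / norm (b - a) ^ (p - mdeg \<alpha>)"

definition whitney_field :: "nat \<Rightarrow> (real^'n::finite) set \<Rightarrow> (('n \<Rightarrow> nat) \<Rightarrow> real^'n \<Rightarrow> real) \<Rightarrow> bool" where
  "whitney_field p X F \<longleftrightarrow>
     (\<forall>c\<in>X. \<forall>\<alpha>\<in>midx p. \<forall>e>0. \<exists>d>0. \<forall>a\<in>X. \<forall>b\<in>X.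
        a \<noteq> b \<and> dist a c < d \<and> dist b c < d \<longrightarrow> \<bar>whitney_delta p F \<alpha> a b\<bar> < e)"

end

theory Submission imports Defs "HOL-Library.FuncSet" begin

lemma finite_midx: "finite (midx p :: ('n::finite \<Rightarrow> nat) set)"
proof (rule finite_subset)
  show "midx p \<subseteq> PiE (UNIV::'n set) (\<lambda>_. {..p})"
  proof
    fix \<alpha> :: "'n \<Rightarrow> nat" assume "\<alpha> \<in> midx p"
    hence "\<alpha> i \<le> p" for i
      using member_le_sum[of i UNIV \<alpha>] unfolding midx_def mdeg_def by auto
    thus "\<alpha> \<in> PiE UNIV (\<lambda>_. {..p})" by (auto simp: PiE_UNIV_domain)
  qed
  show "finite (PiE (UNIV::'n set) (\<lambda>_. {..p}))" by (rule finite_PiE) auto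
qed

lemma le_set_eq: "{\<alpha>::'n::finite\<Rightarrow>nat. \<forall>i. \<alpha> i \<le> \<gamma> i} = PiE UNIV (\<lambda>i. {..\<gamma> i})"
  by (auto simp: PiE_UNIV_domain)

lemma finite_le_set: "finite {\<alpha>::'n::finite\<Rightarrow>nat. \<forall>i. \<alpha> i \<le> \<gamma> i}"
  unfolding le_set_eq by (rule finite_PiE) auto

lemma binom_div: "((x::real) + y) ^ n / fact n = (\<Sum>m\<le>n. x ^ m / fact m * (y ^ (n - m) / fact (n - m)))"
proof -
  have "(x + y) ^ n / fact n = (\<Sum>m\<le>n. of_nat (n choose m) * x ^ m * y ^ (n - m) / fact n)"
    by (simp add: binomial_ring sum_divide_distrib)
  also have "\<dots> = (\<Sum>m\<le>n. x ^ m / fact m * (y ^ (n - m) / fact (n - m)))"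
  proof (rule sum.cong)
    fix m assume "m \<in> {..n}"
    hence "of_nat (n choose m) = (fact n / (fact m * fact (n - m)) :: real)"
      by (simp add: binomial_fact)
    thus "of_nat (n choose m) * x ^ m * y ^ (n - m) / fact n = x ^ m / fact m * (y ^ (n - m) / fact (n - m))"
      by simp
  qed simp
  finally show ?thesis .
qed

lemma mpow_add: "mpow (u + v) \<gamma> / mfact \<gamma> =
  (\<Sum>\<alpha>\<in>{\<alpha>. \<forall>i. \<alpha> i \<le> \<gamma> i}. mpow u \<alpha> / mfact \<alpha> * (mpow v (\<lambda>i. \<gamma> i - \<alpha> i) / mfact (\<lambda>i. \<gamma> i - \<alpha> i)))"
proof -
  have "mpow (u + v) \<gamma> / mfact \<gamma> = (\<Prod>i\<in>UNIV. (u$i + v$i) ^ \<gamma> i / fact (\<gamma> i))"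
    unfolding mpow_def mfact_def by (simp add: prod_dividef)
  also have "\<dots> = (\<Prod>i\<in>UNIV. \<Sum>m\<in>{..\<gamma> i}. u$i ^ m / fact m * (v$i ^ (\<gamma> i - m) / fact (\<gamma> i - m)))"
    by (simp add: binom_div)
  also have "\<dots> = (\<Sum>g\<in>PiE UNIV (\<lambda>i. {..\<gamma> i}). \<Prod>i\<in>UNIV. u$i ^ g i / fact (g i) * (v$i ^ (\<gamma> i - g i) / fact (\<gamma> i - g i)))"
    by (rule prod_sum_PiE) auto
  also have "\<dots> = (\<Sum>\<alpha>\<in>{\<alpha>. \<forall>i. \<alpha> i \<le> \<gamma> i}. mpow u \<alpha> / mfact \<alpha> * (mpow v (\<lambda>i. \<gamma> i - \<alpha> i) / mfact (\<lambda>i. \<gamma> i - \<alpha> i)))"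
    unfolding le_set_eq[symmetric] mpow_def mfact_def
    by (simp add: prod_dividef prod.distrib)
  finally show ?thesis .
qed

lemma mdeg_add: "mdeg (\<lambda>i. \<alpha> i + \<beta> i) = mdeg \<alpha> + mdeg \<beta>"
  unfolding mdeg_def by (simp add: sum.distrib)

lemma le_eq1: "\<forall>i. \<alpha> i \<le> \<gamma> i \<Longrightarrow> (\<lambda>i. \<alpha> i + (\<gamma> i - \<alpha> i)) = (\<gamma>::'n\<Rightarrow>nat)"
  by (auto simp: fun_eq_iff)

lemma mdeg_le_eq: "\<forall>i. \<alpha> i \<le> \<gamma> i \<Longrightarrow> mdeg (\<lambda>i. \<gamma> i - \<alpha> i) = mdeg \<gamma> - mdeg (\<alpha>::'n::finite\<Rightarrow>nat)"
proof -
  assume h: "\<forall>i. \<alpha> i \<le> \<gamma> i"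
  have "mdeg \<gamma> = mdeg \<alpha> + mdeg (\<lambda>i. \<gamma> i - \<alpha> i)" using le_eq1[OF h] mdeg_add by metis
  thus ?thesis by simp
qed

lemma mdeg_mono: "\<forall>i. \<alpha> i \<le> \<gamma> i \<Longrightarrow> mdeg \<alpha> \<le> mdeg (\<gamma>::'n::finite\<Rightarrow>nat)"
  unfolding mdeg_def by (rule sum_mono) auto

lemma reexpand:
  fixes G :: "('n::finite \<Rightarrow> nat) \<Rightarrow> real"
  shows "(\<Sum>\<gamma>\<in>midx p. G \<gamma> / mfact \<gamma> * mpow (x - a) \<gamma>) =
   (\<Sum>\<alpha>\<in>midx p. (\<Sum>\<beta>\<in>midx (p - mdeg \<alpha>). G (\<lambda>i. \<alpha> i + \<beta> i) / mfact \<beta> * mpow (b - a) \<beta>) / mfact \<alpha> * mpow (x - b) \<alpha>)"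
proof -
  have xab: "x - a = (x - b) + (b - a)" by simp
  have "(\<Sum>\<gamma>\<in>midx p. G \<gamma> / mfact \<gamma> * mpow (x - a) \<gamma>) =
     (\<Sum>\<gamma>\<in>midx p. \<Sum>\<alpha>\<in>{\<alpha>. \<forall>i. \<alpha> i \<le> \<gamma> i}. G \<gamma> * (mpow (x - b) \<alpha> / mfact \<alpha> * (mpow (b - a) (\<lambda>i. \<gamma> i - \<alpha> i) / mfact (\<lambda>i. \<gamma> i - \<alpha> i))))"
  proof (rule sum.cong)
    fix \<gamma> :: "'n \<Rightarrow> nat"
    have "G \<gamma> / mfact \<gamma> * mpow (x - a) \<gamma> = G \<gamma> * (mpow (x - a) \<gamma> / mfact \<gamma>)" by simp
    also have "\<dots> = (\<Sum>\<alpha>\<in>{\<alpha>. \<forall>i. \<alpha> i \<le> \<gamma> i}. G \<gamma> * (mpow (x - b) \<alpha> / mfact \<alpha> * (mpow (b - a) (\<lambda>i. \<gamma> i - \<alpha> i) / mfact (\<lambda>i. \<gamma> i - \<alpha> i))))"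
      unfolding xab mpow_add by (simp add: sum_distrib_left)
    finally show "G \<gamma> / mfact \<gamma> * mpow (x - a) \<gamma> = \<dots>" .
  qed simp
  also have "\<dots> = (\<Sum>(\<gamma>,\<alpha>)\<in>Sigma (midx p) (\<lambda>\<gamma>. {\<alpha>. \<forall>i. \<alpha> i \<le> \<gamma> i}). G \<gamma> * (mpow (x - b) \<alpha> / mfact \<alpha> * (mpow (b - a) (\<lambda>i. \<gamma> i - \<alpha> i) / mfact (\<lambda>i. \<gamma> i - \<alpha> i))))"
    by (rule sum.Sigma) (auto simp: finite_midx finite_le_set)
  also have "\<dots> = (\<Sum>(\<alpha>,\<beta>)\<in>Sigma (midx p) (\<lambda>\<alpha>. midx (p - mdeg \<alpha>)). G (\<lambda>i. \<alpha> i + \<beta> i) / mfact \<beta> * mpow (b - a) \<beta> / mfact \<alpha> * mpow (x - b) \<alpha>)"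
    apply (rule sum.reindex_bij_witness[where i = "\<lambda>(\<alpha>,\<beta>). (\<lambda>i. \<alpha> i + \<beta> i, \<alpha>)" and j = "\<lambda>(\<gamma>,\<alpha>). (\<alpha>, \<lambda>i. \<gamma> i - \<alpha> i)"])
    apply (auto simp: midx_def mdeg_add le_eq1 mdeg_le_eq mult_ac intro: order_trans[OF mdeg_mono])
    done
  also have "\<dots> = (\<Sum>\<alpha>\<in>midx p. \<Sum>\<beta>\<in>midx (p - mdeg \<alpha>). G (\<lambda>i. \<alpha> i + \<beta> i) / mfact \<beta> * mpow (b - a) \<beta> / mfact \<alpha> * mpow (x - b) \<alpha>)"
    by (rule sum.Sigma[symmetric]) (auto simp: finite_midx)
  also have "\<dots> = (\<Sum>\<alpha>\<in>midx p. (\<Sum>\<beta>\<in>midx (p - mdeg \<alpha>). G (\<lambda>i. \<alpha> i + \<beta> i) / mfact \<beta> * mpow (b - a) \<beta>) / mfact \<alpha> * mpow (x - b) \<alpha>)"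
    by (simp add: sum_distrib_right sum_divide_distrib)
  finally show ?thesis .
qed


lemma poly_add: "P \<in> Poly_le p \<Longrightarrow> Q \<in> Poly_le p \<Longrightarrow> (\<lambda>x. P x + Q x) \<in> Poly_le p"
proof -
  assume "P \<in> Poly_le p" "Q \<in> Poly_le p"
  then obtain c1 c2 where "P = (\<lambda>x. \<Sum>\<alpha>\<in>midx p. c1 \<alpha> * mpow x \<alpha>)" "Q = (\<lambda>x. \<Sum>\<alpha>\<in>midx p. c2 \<alpha> * mpow x \<alpha>)"
    unfolding Poly_le_def by blast
  thus ?thesis unfolding Poly_le_def
    by (intro CollectI exI[of _ "\<lambda>\<alpha>. c1 \<alpha> + c2 \<alpha>"]) (simp add: sum.distrib distrib_right)
qed

lemma poly_scale: "P \<in> Poly_le p \<Longrightarrow> (\<lambda>x. r * P x) \<in> Poly_le p"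
proof -
  assume "P \<in> Poly_le p"
  then obtain c1 where "P = (\<lambda>x. \<Sum>\<alpha>\<in>midx p. c1 \<alpha> * mpow x \<alpha>)"
    unfolding Poly_le_def by blast
  thus ?thesis unfolding Poly_le_def
    by (intro CollectI exI[of _ "\<lambda>\<alpha>. r * c1 \<alpha>"]) (simp add: sum_distrib_left mult_ac)
qed

lemma poly_zero: "(\<lambda>x. 0) \<in> Poly_le p"
  unfolding Poly_le_def by (intro CollectI exI[of _ "\<lambda>\<alpha>. 0"]) simp

lemma poly_sum: "finite S \<Longrightarrow> (\<forall>s\<in>S. P s \<in> Poly_le p) \<Longrightarrow> (\<lambda>x. \<Sum>s\<in>S. r s * P s x) \<in> Poly_le p"
proof (induction S rule: finite_induct)
  case empty thus ?case using poly_zero by simp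
next
  case (insert s S)
  hence "(\<lambda>x. r s * P s x + (\<Sum>s\<in>S. r s * P s x)) \<in> Poly_le p"
    by (intro poly_add poly_scale) auto
  thus ?case using insert by simp
qed

lemma dual_sum:
  assumes h: "in_dual p \<xi>"
  shows "finite S \<Longrightarrow> (\<forall>s\<in>S. P s \<in> Poly_le p) \<Longrightarrow>
   \<xi> (\<lambda>x. \<Sum>s\<in>S. r s * P s x) = (\<Sum>s\<in>S. r s * \<xi> (P s))"
proof (induction S rule: finite_induct)
  case empty
  have sc: "\<forall>P\<in>Poly_le p. \<forall>r. \<xi> (\<lambda>x. r * P x) = r * \<xi> P" using h unfolding in_dual_def by (rule conjunct2)
  have "\<xi> (\<lambda>x. 0 * (\<lambda>x. 0) x) = 0 * \<xi> (\<lambda>x. 0)" by (rule sc[rule_format, OF poly_zero])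
  thus ?case by simp
next
  case (insert s S)
  have ad: "\<forall>P\<in>Poly_le p. \<forall>Q\<in>Poly_le p. \<xi> (\<lambda>x. P x + Q x) = \<xi> P + \<xi> Q" using h unfolding in_dual_def by (rule conjunct1)
  have sc: "\<forall>P\<in>Poly_le p. \<forall>r. \<xi> (\<lambda>x. r * P x) = r * \<xi> P" using h unfolding in_dual_def by (rule conjunct2)
  have A: "(\<lambda>x. r s * P s x) \<in> Poly_le p" using insert.prems by (intro poly_scale) auto
  have B: "(\<lambda>x. \<Sum>s\<in>S. r s * P s x) \<in> Poly_le p" using insert.prems insert.hyps by (intro poly_sum) auto
  have "\<xi> (\<lambda>x. r s * P s x + (\<Sum>s\<in>S. r s * P s x)) = \<xi> (\<lambda>x. r s * P s x) + \<xi> (\<lambda>x. \<Sum>s\<in>S. r s * P s x)"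
    by (rule ad[rule_format, OF A B])
  also have "\<xi> (\<lambda>x. r s * P s x) = r s * \<xi> (P s)"
    using sc insert.prems by auto
  also have "\<xi> (\<lambda>x. \<Sum>s\<in>S. r s * P s x) = (\<Sum>s\<in>S. r s * \<xi> (P s))"
    using insert.IH insert.prems by auto
  finally show ?case using insert.hyps by simp
qed

lemma poly_mpow: "\<alpha> \<in> midx p \<Longrightarrow> (\<lambda>x. mpow (x - b) \<alpha> / mfact \<alpha>) \<in> Poly_le p"
proof -
  assume h: "\<alpha> \<in> midx p"
  define G where "G = (\<lambda>\<gamma>::'a\<Rightarrow>nat. if \<gamma> = \<alpha> then 1 else (0::real))"
  have "(\<lambda>x. mpow (x - b) \<alpha> / mfact \<alpha>) = (\<lambda>x. \<Sum>\<gamma>\<in>midx p. G \<gamma> / mfact \<gamma> * mpow (x - b) \<gamma>)"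
  proof
    fix x
    have "(\<Sum>\<gamma>\<in>midx p. G \<gamma> / mfact \<gamma> * mpow (x - b) \<gamma>) = (\<Sum>\<gamma>\<in>midx p. if \<gamma> = \<alpha> then mpow (x - b) \<gamma> / mfact \<gamma> else 0)"
      by (intro sum.cong) (auto simp: G_def)
    also have "\<dots> = mpow (x - b) \<alpha> / mfact \<alpha>" using h by (simp add: sum.delta[OF finite_midx])
    finally show "mpow (x - b) \<alpha> / mfact \<alpha> = (\<Sum>\<gamma>\<in>midx p. G \<gamma> / mfact \<gamma> * mpow (x - b) \<gamma>)" by simp
  qed
  also have "\<dots> = (\<lambda>x. \<Sum>\<alpha>'\<in>midx p. ((\<Sum>\<beta>\<in>midx (p - mdeg \<alpha>'). G (\<lambda>i. \<alpha>' i + \<beta> i) / mfact \<beta> * mpow (0 - b) \<beta>) / mfact \<alpha>') * mpow x \<alpha>')"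
    using reexpand[where G=G and a=b and b=0] by simp
  finally show ?thesis unfolding Poly_le_def
    by (intro CollectI exI[where x="\<lambda>\<alpha>'. (\<Sum>\<beta>\<in>midx (p - mdeg \<alpha>'). G (\<lambda>i. \<alpha>' i + \<beta> i) / mfact \<beta> * mpow (0 - b) \<beta>) / mfact \<alpha>'"])
qed

lemma dual_form: "in_dual p \<xi> \<Longrightarrow>
   \<xi> (\<lambda>x. \<Sum>\<gamma>\<in>midx p. G \<gamma> / mfact \<gamma> * mpow (x - b) \<gamma>) = (\<Sum>\<gamma>\<in>midx p. G \<gamma> * dual_coord \<xi> \<gamma> b)"
proof -
  assume h: "in_dual p \<xi>"
  have "\<xi> (\<lambda>x. \<Sum>\<gamma>\<in>midx p. G \<gamma> / mfact \<gamma> * mpow (x - b) \<gamma>) = \<xi> (\<lambda>x. \<Sum>\<gamma>\<in>midx p. G \<gamma> * (\<lambda>x. mpow (x - b) \<gamma> / mfact \<gamma>) x)"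
    by simp
  also have "\<dots> = (\<Sum>\<gamma>\<in>midx p. G \<gamma> * \<xi> (\<lambda>x. mpow (x - b) \<gamma> / mfact \<gamma>))"
    by (rule dual_sum[OF h finite_midx]) (auto intro: poly_mpow)
  finally show ?thesis unfolding dual_coord_def .
qed

definition Cc :: "nat \<Rightarrow> (('n::finite \<Rightarrow> nat) \<Rightarrow> real^'n \<Rightarrow> real) \<Rightarrow> ('n \<Rightarrow> nat) \<Rightarrow> real^'n \<Rightarrow> real^'n \<Rightarrow> real" where
  "Cc p F \<alpha> u b = (\<Sum>\<beta>\<in>midx (p - mdeg \<alpha>). F (\<lambda>i. \<alpha> i + \<beta> i) u / mfact \<beta> * mpow (b - u) \<beta>)"

lemma dual_taylor: "in_dual p \<xi> \<Longrightarrow> \<xi> (taylor p F u) = (\<Sum>\<alpha>\<in>midx p. Cc p F \<alpha> u b * dual_coord \<xi> \<alpha> b)"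
proof -
  assume h: "in_dual p \<xi>"
  have "taylor p F u = (\<lambda>x. \<Sum>\<alpha>\<in>midx p. Cc p F \<alpha> u b / mfact \<alpha> * mpow (x - b) \<alpha>)"
    unfolding taylor_def Cc_def using reexpand[where G="\<lambda>\<gamma>. F \<gamma> u" and a=u and b=b] by simp
  thus ?thesis using dual_form[OF h] by simp
qed

lemma dual_taylor0: "in_dual p \<xi> \<Longrightarrow> \<xi> (taylor p F b) = (\<Sum>\<alpha>\<in>midx p. F \<alpha> b * dual_coord \<xi> \<alpha> b)"
  unfolding taylor_def by (rule dual_form)

lemma mpow_zero: "mpow (0::real^'n::finite) \<beta> = (if \<beta> = (\<lambda>_. 0) then 1 else 0)"
proof (cases "\<beta> = (\<lambda>_. 0)")
  case True thus ?thesis by (simp add: mpow_def)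
next
  case False
  then obtain i where "\<beta> i \<noteq> 0" by auto
  hence "(\<Prod>i\<in>UNIV. (0::real) ^ \<beta> i) = 0" by (intro prod_zero) auto
  thus ?thesis using False by (simp add: mpow_def)
qed

lemma Cc_self: "Cc p F \<alpha> b b = F \<alpha> b"
proof -
  have "Cc p F \<alpha> b b = (\<Sum>\<beta>\<in>midx (p - mdeg \<alpha>). if \<beta> = (\<lambda>_. 0) then F (\<lambda>i. \<alpha> i + \<beta> i) b / mfact \<beta> else 0)"
    unfolding Cc_def by (intro sum.cong) (auto simp: mpow_zero)
  also have "\<dots> = F \<alpha> b"
  proof -
    have z: "(\<lambda>_. 0) \<in> midx (p - mdeg \<alpha>)" by (simp add: midx_def mdeg_def)
    have m: "mfact (\<lambda>_::'a. 0) = 1" by (simp add: mfact_def)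
    show ?thesis by (simp only: sum.delta[OF finite_midx] z if_True m) simp
  qed
  finally show ?thesis .
qed

lemma null_crit: "(\<And>e. e > 0 \<Longrightarrow> eventually (\<lambda>j. \<bar>f j\<bar> \<le> e) sequentially) \<Longrightarrow> f \<longlonglongrightarrow> (0::real)"
proof (rule tendstoI)
  fix e :: real assume h: "\<And>e. e > 0 \<Longrightarrow> eventually (\<lambda>j. \<bar>f j\<bar> \<le> e) sequentially" and e: "e > 0"
  from h[of "e/2"] e show "eventually (\<lambda>j. dist (f j) 0 < e) sequentially"
    by (auto elim: eventually_mono)
qed

lemma whit:
  assumes W: "whitney_field p X F" and aX: "a \<in> X" and u: "u \<longlonglongrightarrow> a" and v: "v \<longlonglongrightarrow> a"
    and uX: "\<forall>j. u j \<in> X" and vX: "\<forall>j. v j \<in> X" and al: "\<alpha> \<in> midx p" and e: "e > 0"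
  shows "eventually (\<lambda>j. \<bar>F \<alpha> (v j) - Cc p F \<alpha> (u j) (v j)\<bar> \<le> e * norm (v j - u j) ^ (p - mdeg \<alpha>)) sequentially"
proof -
  obtain d where d: "d > 0" "\<forall>x\<in>X. \<forall>y\<in>X. x \<noteq> y \<and> dist x a < d \<and> dist y a < d \<longrightarrow> \<bar>whitney_delta p F \<alpha> x y\<bar> < e"
    using W aX al e unfolding whitney_field_def by blast
  have "eventually (\<lambda>j. dist (u j) a < d \<and> dist (v j) a < d) sequentially"
    using tendstoD[OF u d(1)] tendstoD[OF v d(1)] by (rule eventually_conj)
  thus ?thesis
  proof (rule eventually_mono)
    fix j assume j: "dist (u j) a < d \<and> dist (v j) a < d"
    show "\<bar>F \<alpha> (v j) - Cc p F \<alpha> (u j) (v j)\<bar> \<le> e * norm (v j - u j) ^ (p - mdeg \<alpha>)"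
    proof (cases "u j = v j")
      case True thus ?thesis using e by (simp add: Cc_self)
    next
      case False
      hence np: "norm (v j - u j) ^ (p - mdeg \<alpha>) > 0" by simp
      have "\<bar>whitney_delta p F \<alpha> (u j) (v j)\<bar> < e" using d(2) uX vX j False by blast
      hence "\<bar>F \<alpha> (v j) - Cc p F \<alpha> (u j) (v j)\<bar> / norm (v j - u j) ^ (p - mdeg \<alpha>) < e"
        unfolding whitney_delta_def Cc_def by simp
      thus ?thesis using np by (simp add: divide_less_eq)
    qed
  qed
qed

theorem lemma4p8:
  fixes U X :: "(real^'n::finite) set"
    and p k :: nat
    and as :: "nat \<Rightarrow> nat \<Rightarrow> real^'n"
    and \<xi>s :: "nat \<Rightarrow> nat \<Rightarrow> (real^'n \<Rightarrow> real) \<Rightarrow> real"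
    and a :: "real^'n" and \<xi> :: "(real^'n \<Rightarrow> real) \<Rightarrow> real" and c :: real
    and F :: "('n \<Rightarrow> nat) \<Rightarrow> real^'n \<Rightarrow> real"
  assumes "open U" and "X \<subseteq> U" and "closedin (top_of_set U) X"
    and "k \<ge> 1"
    and "\<forall>i\<le>k. \<forall>j. as i j \<in> X"
    and "\<forall>i\<le>k. \<forall>j. in_dual p (\<xi>s i j)"
    and "in_dual p \<xi>"
    and "a \<in> X"
    and "\<forall>i\<le>k. (\<lambda>j. as i j) \<longlonglongrightarrow> a"
    and "dual_tendsto p (\<lambda>j P. \<Sum>i\<le>k. \<xi>s i j P) \<xi>"
    and "\<forall>i\<le>k. \<forall>j. \<forall>\<alpha>\<in>midx p.
           norm (as i j - as 0 j) ^ (p - mdeg \<alpha>) * \<bar>dual_coord (\<xi>s i j) \<alpha> (as i j)\<bar> \<le> c"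
    and "whitney_field p X F"
  shows "(\<lambda>j. \<Sum>i\<le>k. \<xi>s i j (taylor p F (as i j))) \<longlonglongrightarrow> \<xi> (taylor p F a)"
proof -
  define S where "S \<alpha> j = (\<Sum>i\<le>k. dual_coord (\<xi>s i j) \<alpha> a)" for \<alpha> j
  define E where "E i \<alpha> j = (F \<alpha> (as i j) - Cc p F \<alpha> (as 0 j) (as i j)) * dual_coord (\<xi>s i j) \<alpha> (as i j)" for i \<alpha> j
  have eq: "(\<Sum>i\<le>k. \<xi>s i j (taylor p F (as i j))) =
     (\<Sum>\<alpha>\<in>midx p. Cc p F \<alpha> (as 0 j) a * S \<alpha> j) + (\<Sum>i\<le>k. \<Sum>\<alpha>\<in>midx p. E i \<alpha> j)" for j
  proof -
    have ieq: "\<xi>s i j (taylor p F (as i j)) = (\<Sum>\<alpha>\<in>midx p. Cc p F \<alpha> (as 0 j) a * dual_coord (\<xi>s i j) \<alpha> a) + (\<Sum>\<alpha>\<in>midx p. E i \<alpha> j)"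
      if i: "i \<in> {..k}" for i
    proof -
      have d: "in_dual p (\<xi>s i j)" using assms(6) i by blast
      have 1: "\<xi>s i j (taylor p F (as i j)) = (\<Sum>\<alpha>\<in>midx p. F \<alpha> (as i j) * dual_coord (\<xi>s i j) \<alpha> (as i j))"
        by (rule dual_taylor0[OF d])
      have 2: "\<xi>s i j (taylor p F (as 0 j)) = (\<Sum>\<alpha>\<in>midx p. Cc p F \<alpha> (as 0 j) (as i j) * dual_coord (\<xi>s i j) \<alpha> (as i j))"
        by (rule dual_taylor[OF d])
      have 3: "\<xi>s i j (taylor p F (as 0 j)) = (\<Sum>\<alpha>\<in>midx p. Cc p F \<alpha> (as 0 j) a * dual_coord (\<xi>s i j) \<alpha> a)"
        by (rule dual_taylor[OF d])
      have "(\<Sum>\<alpha>\<in>midx p. E i \<alpha> j) = \<xi>s i j (taylor p F (as i j)) - \<xi>s i j (taylor p F (as 0 j))"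
        unfolding 1 2 E_def by (simp add: sum_subtractf left_diff_distrib)
      thus ?thesis using 3 by simp
    qed
    have "(\<Sum>i\<le>k. \<xi>s i j (taylor p F (as i j))) =
       (\<Sum>i\<le>k. (\<Sum>\<alpha>\<in>midx p. Cc p F \<alpha> (as 0 j) a * dual_coord (\<xi>s i j) \<alpha> a) + (\<Sum>\<alpha>\<in>midx p. E i \<alpha> j))"
      by (rule sum.cong[OF refl ieq])
    also have "\<dots> = (\<Sum>i\<le>k. \<Sum>\<alpha>\<in>midx p. Cc p F \<alpha> (as 0 j) a * dual_coord (\<xi>s i j) \<alpha> a) + (\<Sum>i\<le>k. \<Sum>\<alpha>\<in>midx p. E i \<alpha> j)"
      by (rule sum.distrib)
    also have "(\<Sum>i\<le>k. \<Sum>\<alpha>\<in>midx p. Cc p F \<alpha> (as 0 j) a * dual_coord (\<xi>s i j) \<alpha> a) = (\<Sum>\<alpha>\<in>midx p. Cc p F \<alpha> (as 0 j) a * S \<alpha> j)"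
      unfolding S_def by (subst sum.swap) (simp add: sum_distrib_left)
    finally show ?thesis .
  qed
  have z: "(\<lambda>_::'n. 0::nat) \<in> midx p" by (simp add: midx_def mdeg_def)
  have "norm (as 0 0 - as 0 0) ^ (p - mdeg (\<lambda>_::'n. 0::nat)) * \<bar>dual_coord (\<xi>s 0 0) (\<lambda>_. 0) (as 0 0)\<bar> \<le> c"
    by (rule assms(11)[rule_format, OF le0 z])
  hence c0: "c \<ge> 0" by (smt (verit) abs_ge_zero mult_nonneg_nonneg norm_ge_zero zero_le_power)
  have L1: "(\<lambda>j. \<Sum>\<alpha>\<in>midx p. Cc p F \<alpha> (as 0 j) a * S \<alpha> j) \<longlonglongrightarrow> (\<Sum>\<alpha>\<in>midx p. F \<alpha> a * dual_coord \<xi> \<alpha> a)"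
  proof (rule tendsto_sum, rule tendsto_mult)
    fix \<alpha> :: "'n \<Rightarrow> nat" assume al: "\<alpha> \<in> midx p"
    have "(\<lambda>j. F \<alpha> a - Cc p F \<alpha> (as 0 j) a) \<longlonglongrightarrow> 0"
    proof (rule null_crit)
      fix e :: real assume e: "e > 0"
      have u: "(\<lambda>j. as 0 j) \<longlonglongrightarrow> a" using assms(9) by blast
      have w: "eventually (\<lambda>j. \<bar>F \<alpha> a - Cc p F \<alpha> (as 0 j) a\<bar> \<le> e * norm (a - as 0 j) ^ (p - mdeg \<alpha>)) sequentially"
        using whit[OF assms(12) assms(8) u tendsto_const, of \<alpha> e] assms(5) assms(8) al e by auto
      have n: "eventually (\<lambda>j. norm (a - as 0 j) < 1) sequentially"
        using tendstoD[OF u, of 1] by (simp add: dist_norm norm_minus_commute)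
      show "eventually (\<lambda>j. \<bar>F \<alpha> a - Cc p F \<alpha> (as 0 j) a\<bar> \<le> e) sequentially"
        using w n
      proof eventually_elim
        case (elim j)
        have "norm (a - as 0 j) ^ (p - mdeg \<alpha>) \<le> 1" using elim(2) by (intro power_le_one) auto
        hence "e * norm (a - as 0 j) ^ (p - mdeg \<alpha>) \<le> e" using e by (simp add: mult_left_le)
        thus ?case using elim(1) by linarith
      qed
    qed
    from tendsto_diff[OF tendsto_const this, of "F \<alpha> a"]
    show "(\<lambda>j. Cc p F \<alpha> (as 0 j) a) \<longlonglongrightarrow> F \<alpha> a" by simp
    have "(\<lambda>x. mpow (x - a) \<alpha> / mfact \<alpha>) \<in> Poly_le p" using al by (rule poly_mpow)
    thus "(\<lambda>j. S \<alpha> j) \<longlonglongrightarrow> dual_coord \<xi> \<alpha> a"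
      using assms(10) unfolding dual_tendsto_def S_def dual_coord_def by blast
  qed
  have L2: "(\<lambda>j. \<Sum>i\<le>k. \<Sum>\<alpha>\<in>midx p. E i \<alpha> j) \<longlonglongrightarrow> 0"
  proof (rule tendsto_null_sum, rule tendsto_null_sum)
    fix i and \<alpha> :: "'n \<Rightarrow> nat" assume i: "i \<in> {..k}" and al: "\<alpha> \<in> midx p"
    show "(\<lambda>j. E i \<alpha> j) \<longlonglongrightarrow> 0"
    proof (rule null_crit)
      fix e :: real assume e: "e > 0"
      define e' where "e' = e / (c + 1)"
      have e': "e' > 0" using e c0 by (simp add: e'_def)
      have u: "(\<lambda>j. as 0 j) \<longlonglongrightarrow> a" using assms(9) by blast
      have v: "(\<lambda>j. as i j) \<longlonglongrightarrow> a" using assms(9) i by blast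
      have w: "eventually (\<lambda>j. \<bar>F \<alpha> (as i j) - Cc p F \<alpha> (as 0 j) (as i j)\<bar> \<le> e' * norm (as i j - as 0 j) ^ (p - mdeg \<alpha>)) sequentially"
        using whit[OF assms(12) assms(8) u v, of \<alpha> e'] assms(5) i al e' by auto
      show "eventually (\<lambda>j. \<bar>E i \<alpha> j\<bar> \<le> e) sequentially"
        using w
      proof eventually_elim
        case (elim j)
        have cb: "norm (as i j - as 0 j) ^ (p - mdeg \<alpha>) * \<bar>dual_coord (\<xi>s i j) \<alpha> (as i j)\<bar> \<le> c"
          using assms(11) i al by blast
        have "\<bar>E i \<alpha> j\<bar> = \<bar>F \<alpha> (as i j) - Cc p F \<alpha> (as 0 j) (as i j)\<bar> * \<bar>dual_coord (\<xi>s i j) \<alpha> (as i j)\<bar>"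
          unfolding E_def by (simp add: abs_mult)
        also have "\<dots> \<le> e' * norm (as i j - as 0 j) ^ (p - mdeg \<alpha>) * \<bar>dual_coord (\<xi>s i j) \<alpha> (as i j)\<bar>"
          using elim by (intro mult_right_mono) auto
        also have "\<dots> \<le> e' * c" using cb e' by (simp add: mult.assoc mult_left_mono)
        also have "\<dots> \<le> e"
        proof -
          have "e' * c = e * (c / (c + 1))" by (simp add: e'_def)
          also have "\<dots> \<le> e * 1" using e c0 by (intro mult_left_mono) auto
          finally show ?thesis by simp
        qed
        finally show ?case .
      qed
    qed
  qed
  have fin: "\<xi> (taylor p F a) = (\<Sum>\<alpha>\<in>midx p. F \<alpha> a * dual_coord \<xi> \<alpha> a)"
    by (rule dual_taylor0[OF assms(7)])
  show ?thesis using tendsto_add[OF L1 L2] unfolding eq fin by simp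
qed

end
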